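(* Let $(X,d)$ be a metric space, let $u,u_1,u_2,\ldots\in F_{USC}(X)$ and let $P$ be a dense subset of $[0,1]$. If $H([u_n]_\alpha,[u]_\alpha)\to0$ for each $\alpha\in P$, then $H_{\rm end}(u_n,u)\to0$.
   Context: A fuzzy set on $X$ is a function $u:X\to[0,1]$, with $\alpha$-cuts $[u]_\alpha=\{x: u(x)\ge\alpha\}$ for $\alpha\in(0,1]$ and $[u]_0=\overline{\{u>0\}}$. $F_{USC}(X)$ is the set of fuzzy sets with all $\alpha$-cuts ($\alpha\in[0,1]$) non-empty and closed. For non-empty closed sets $U,V$ in a metric space $(Y,\rho)$, $H(U,V)=\max\{\sup_{a\in U}\inf_{b\in V}\rho(a,b),\sup_{b\in V}\inf_{a\in U}\rho(a,b)\}$ (Hausdorff distance). $X\times[0,1]$ is metrized by $\overline{d}((x,\alpha),(y,\beta))=d(x,y)+|\alpha-\beta|$, ${\rm end}\,u=\{(x,t)\in X\times[0,1]: u(x)\ge t\}$, and $H_{\rm end}(u,v)=H({\rm end}\,u,{\rm end}\,v)$ computed with $\overline{d}$. *)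

theory Defs
  imports "HOL-Analysis.Analysis" "HOL-Library.Extended_Real"
begin

definition cut :: "('a::topological_space \<Rightarrow> real) \<Rightarrow> real \<Rightarrow> 'a set" where
  "cut u \<alpha> = (if \<alpha> = 0 then closure {x. u x > 0} else {x. u x \<ge> \<alpha>})"

definition F_USC :: "('a::topological_space \<Rightarrow> real) set" where
  "F_USC = {u. (\<forall>x. 0 \<le> u x \<and> u x \<le> 1) \<and>
               (\<forall>\<alpha>\<in>{0..1}. cut u \<alpha> \<noteq> {} \<and> closed (cut u \<alpha>))}"

text \<open>Hausdorff distance w.r.t. a metric rho, valued in the extended reals
  (it may be infinite for unbounded closed sets).\<close>
definition Hd :: "('b \<Rightarrow> 'b \<Rightarrow> real) \<Rightarrow> 'b set \<Rightarrow> 'b set \<Rightarrow> ereal" where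
  "Hd \<rho> U V = max (SUP a\<in>U. INF b\<in>V. ereal (\<rho> a b)) (SUP b\<in>V. INF a\<in>U. ereal (\<rho> a b))"

definition dbar :: "('a::metric_space \<times> real) \<Rightarrow> ('a \<times> real) \<Rightarrow> real" where
  "dbar p q = dist (fst p) (fst q) + \<bar>snd p - snd q\<bar>"

definition endo :: "('a \<Rightarrow> real) \<Rightarrow> ('a \<times> real) set" where
  "endo u = {(x, t). t \<in> {0..1} \<and> u x \<ge> t}"

definition H_end :: "('a::metric_space \<Rightarrow> real) \<Rightarrow> ('a \<Rightarrow> real) \<Rightarrow> ereal" where
  "H_end u v = Hd dbar (endo u) (endo v)"

end

theory Submission
  imports Defs
begin

lemma Hd_ltD1:
  assumes "Hd \<rho> U V < ereal e" "a \<in> U" shows "\<exists>b\<in>V. \<rho> a b < e"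
proof -
  have "(INF b\<in>V. ereal (\<rho> a b)) \<le> (SUP a\<in>U. INF b\<in>V. ereal (\<rho> a b))"
    using assms(2) by (rule SUP_upper)
  also have "\<dots> \<le> Hd \<rho> U V" unfolding Hd_def by simp
  finally have "(INF b\<in>V. ereal (\<rho> a b)) < ereal e" using assms(1) by simp
  then show ?thesis by (simp add: INF_less_iff)
qed

lemma Hd_ltD2:
  assumes "Hd \<rho> U V < ereal e" "a \<in> V" shows "\<exists>b\<in>U. \<rho> b a < e"
proof -
  have "(INF b\<in>U. ereal (\<rho> b a)) \<le> (SUP a\<in>V. INF b\<in>U. ereal (\<rho> b a))"
    using assms(2) by (rule SUP_upper)
  also have "\<dots> \<le> Hd \<rho> U V" unfolding Hd_def by simp
  finally have "(INF b\<in>U. ereal (\<rho> b a)) < ereal e" using assms(1) by simp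
  then show ?thesis by (simp add: INF_less_iff)
qed

lemma Hd_le:
  assumes "\<forall>a\<in>U. \<exists>b\<in>V. \<rho> a b < e" "\<forall>b\<in>V. \<exists>a\<in>U. \<rho> a b < e"
  shows "Hd \<rho> U V \<le> ereal e"
  unfolding Hd_def
proof (rule max.boundedI)
  show "(SUP a\<in>U. INF b\<in>V. ereal (\<rho> a b)) \<le> ereal e"
  proof (rule SUP_least)
    fix a assume "a \<in> U"
    then obtain b where "b \<in> V" "\<rho> a b < e" using assms(1) by blast
    then show "(INF b\<in>V. ereal (\<rho> a b)) \<le> ereal e"
      by (intro INF_lower2[of b]) auto
  qed
  show "(SUP b\<in>V. INF a\<in>U. ereal (\<rho> a b)) \<le> ereal e"
  proof (rule SUP_least)
    fix b assume "b \<in> V"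
    then obtain a where "a \<in> U" "\<rho> a b < e" using assms(2) by blast
    then show "(INF a\<in>U. ereal (\<rho> a b)) \<le> ereal e"
      by (intro INF_lower2[of a]) auto
  qed
qed

lemma Hd_nonneg:
  assumes "\<And>a b. 0 \<le> \<rho> a b" "a0 \<in> U"
  shows "0 \<le> Hd \<rho> U V"
proof -
  have "0 \<le> (INF b\<in>V. ereal (\<rho> a0 b))"
    by (rule INF_greatest) (use assms(1) in simp)
  also have "\<dots> \<le> (SUP a\<in>U. INF b\<in>V. ereal (\<rho> a b))"
    using assms(2) by (rule SUP_upper)
  also have "\<dots> \<le> Hd \<rho> U V" unfolding Hd_def by simp
  finally show ?thesis .
qed

lemma grid:
  fixes P :: "real set"
  assumes "{0..1} \<subseteq> closure P" "\<epsilon> > 0"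
  shows "\<exists>S. finite S \<and> S \<subseteq> P \<and> (\<forall>p\<in>S. 0 < p) \<and>
     (\<forall>t\<in>{0..1}. t < \<epsilon> \<or> (\<exists>p\<in>S. p \<le> t \<and> t - p < \<epsilon>))"
proof -
  obtain N :: nat where N: "3 / \<epsilon> < N" using reals_Archimedean2 by blast
  have "0 < 3 / \<epsilon>" using assms(2) by simp
  then have Nr: "0 < real N" using N by linarith
  define h where "h = 1 / real N"
  have hpos: "h > 0" using Nr unfolding h_def by simp
  have Nh: "real N * h = 1" using Nr unfolding h_def by simp
  have "3 < \<epsilon> * real N" using N assms(2) by (simp add: divide_less_eq mult.commute)
  then have "3 * h < \<epsilon> * real N * h" using hpos by (intro mult_strict_right_mono) auto
  then have h3: "3 * h < \<epsilon>" using Nh by (simp add: mult.assoc)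
  have "\<forall>j\<in>{1..N}. \<exists>p\<in>P. dist p (real j * h) < h / 2"
  proof
    fix j assume j: "j \<in> {1..N}"
    have "real j * h \<le> real N * h" using j hpos by (intro mult_right_mono) auto
    then have "real j * h \<in> {0..1}" using hpos Nh by simp
    then have "real j * h \<in> closure P" using assms(1) by blast
    moreover have "h / 2 > 0" using hpos by simp
    ultimately show "\<exists>p\<in>P. dist p (real j * h) < h / 2"
      using closure_approachable by blast
  qed
  then obtain q where q: "\<And>j. j \<in> {1..N} \<Longrightarrow> q j \<in> P \<and> dist (q j) (real j * h) < h / 2"
    by metis
  have qlo: "q j > real j * h - h / 2" and qhi: "q j < real j * h + h / 2"
    if "j \<in> {1..N}" for j
  proof -
    have "\<bar>q j - real j * h\<bar> < h / 2" using q[OF that] by (simp only: dist_real_def)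
    then show "q j > real j * h - h / 2" "q j < real j * h + h / 2" by (simp_all only: abs_less_iff; linarith)+
  qed
  show ?thesis
  proof (intro exI conjI ballI)
    show "finite (q ` {1..N})" by simp
    show "q ` {1..N} \<subseteq> P" using q by auto
    show "0 < p" if pS: "p \<in> q ` {1..N}" for p
    proof -
      obtain j where j: "j \<in> {1..N}" "p = q j" using pS by blast
      have "1 * h \<le> real j * h" using j hpos by (intro mult_right_mono) auto
      then show ?thesis using qlo[OF j(1)] j hpos by linarith
    qed
    fix t :: real assume t: "t \<in> {0..1}"
    show "t < \<epsilon> \<or> (\<exists>p\<in>q ` {1..N}. p \<le> t \<and> t - p < \<epsilon>)"
    proof (cases "t < \<epsilon>")
      case True then show ?thesis by simp
    next
      case False
      define k where "k = nat \<lfloor>t * N\<rfloor>"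
      have tN0: "0 \<le> t * N" using t Nr by simp
      have fl1: "real k \<le> t * N" "t * N < real k + 1"
        unfolding k_def using tN0 by linarith+
      have tNh: "t * real N * h = t" using Nh by (simp add: mult.assoc)
      have "(real k + 1) * h > t * N * h" using fl1 hpos by (intro mult_strict_right_mono) auto
      then have tlt: "t < real k * h + h" using tNh by (simp add: distrib_right)
      have "real k * h \<le> t * N * h" using fl1 hpos by (intro mult_right_mono) auto
      then have tge: "real k * h \<le> t" using tNh by simp
      have "3 * h < real k * h + h" using tlt False h3 by linarith
      then have "3 < real k + 1" using hpos by (simp add: algebra_simps)
      then have k3: "k \<ge> 3" by linarith
      have "t * real N \<le> 1 * real N" using t by (intro mult_right_mono) auto
      then have "real k \<le> real N" using fl1 by linarith
      then have kN: "k \<le> N" by simp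
      have j: "k - 1 \<in> {1..N}" using k3 kN by auto
      have rk: "real (k - 1) = real k - 1" using k3 by simp
      have A: "q (k - 1) < (real k - 1) * h + h / 2" using qhi[OF j] rk by simp
      have B: "q (k - 1) > (real k - 1) * h - h / 2" using qlo[OF j] rk by simp
      have le: "q (k - 1) \<le> t" using A tge hpos by (simp add: algebra_simps)
      have "t - q (k - 1) < \<epsilon>" using B tlt h3 hpos by (simp add: algebra_simps)
      then show ?thesis using le j by blast
    qed
  qed
qed

lemma dbar_sym: "dbar a b = dbar b a"
  by (simp add: dbar_def dist_commute abs_minus_commute)

lemma transfer_end:
  fixes v w :: "'a::metric_space \<Rightarrow> real"
  assumes S: "\<forall>p\<in>S. 0 < p" "S \<subseteq> {0..1}"
    and cov: "\<forall>t\<in>{0..1}. t < \<epsilon> \<or> (\<exists>p\<in>S. p \<le> t \<and> t - p < \<epsilon>)"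
    and near: "\<forall>p\<in>S. \<forall>x\<in>cut v p. \<exists>y\<in>cut w p. dist x y < \<epsilon>"
    and wnn: "\<forall>x. 0 \<le> w x"
  shows "\<forall>a\<in>endo v. \<exists>b\<in>endo w. dbar a b < 2 * \<epsilon>"
proof
  fix a assume a: "a \<in> endo v"
  obtain x t where xt: "a = (x, t)" by (cases a)
  have t: "t \<in> {0..1}" "v x \<ge> t" using a xt by (auto simp: endo_def)
  from cov t(1) consider "t < \<epsilon>" | p where "p \<in> S" "p \<le> t" "t - p < \<epsilon>" by blast
  then show "\<exists>b\<in>endo w. dbar a b < 2 * \<epsilon>"
  proof cases
    case 1
    have "(x, 0) \<in> endo w" using wnn by (auto simp: endo_def)
    moreover have "dbar a (x, 0) < 2 * \<epsilon>" using 1 t xt by (simp add: dbar_def)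
    ultimately show ?thesis by blast
  next
    case 2
    have p0: "p \<noteq> 0" "p \<in> {0..1}" using 2 S by auto
    have "x \<in> cut v p" using p0 t 2 by (simp add: cut_def)
    then obtain y where y: "y \<in> cut w p" "dist x y < \<epsilon>" using near 2 by blast
    have "(y, p) \<in> endo w" using y p0 by (auto simp: cut_def endo_def)
    moreover have "dbar a (y, p) < 2 * \<epsilon>" using y 2 xt by (simp add: dbar_def)
    ultimately show ?thesis by blast
  qed
qed

theorem theorem4p3:
  fixes u :: "'a::metric_space \<Rightarrow> real" and us :: "nat \<Rightarrow> 'a \<Rightarrow> real" and P :: "real set"
  assumes "u \<in> F_USC" and "\<And>n. us n \<in> F_USC"
    and "P \<subseteq> {0..1}" and "{0..1} \<subseteq> closure P"
    and "\<And>\<alpha>. \<alpha> \<in> P \<Longrightarrow> (\<lambda>n. Hd dist (cut (us n) \<alpha>) (cut u \<alpha>)) \<longlonglongrightarrow> 0"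
  shows "(\<lambda>n. H_end (us n) u) \<longlonglongrightarrow> 0"
proof -
  have unn: "\<forall>x. 0 \<le> u x" using assms(1) by (simp add: F_USC_def)
  have usnn: "\<forall>x. 0 \<le> us n x" for n using assms(2)[of n] by (simp add: F_USC_def)
  have key: "eventually (\<lambda>n. H_end (us n) u \<le> ereal (2 * \<epsilon>)) sequentially" if e: "\<epsilon> > 0" for \<epsilon>
  proof -
    obtain S where S: "finite S" "S \<subseteq> P" "\<forall>p\<in>S. 0 < p"
      "\<forall>t\<in>{0..1}. t < \<epsilon> \<or> (\<exists>p\<in>S. p \<le> t \<and> t - p < \<epsilon>)"
      using grid[OF assms(4) e] by (elim exE conjE) (intro that)
    have S01: "S \<subseteq> {0..1}" using S(2) assms(3) by blast
    have "\<forall>p\<in>S. eventually (\<lambda>n. Hd dist (cut (us n) p) (cut u p) < ereal \<epsilon>) sequentially"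
    proof
      fix p assume "p \<in> S"
      then have "(\<lambda>n. Hd dist (cut (us n) p) (cut u p)) \<longlonglongrightarrow> 0" using assms(5) S(2) by blast
      moreover have "(0::ereal) < ereal \<epsilon>" using e by simp
      ultimately show "eventually (\<lambda>n. Hd dist (cut (us n) p) (cut u p) < ereal \<epsilon>) sequentially"
        by (rule order_tendstoD)
    qed
    then have ev: "eventually (\<lambda>n. \<forall>p\<in>S. Hd dist (cut (us n) p) (cut u p) < ereal \<epsilon>) sequentially"
      by (rule eventually_ball_finite[OF S(1)])
    show ?thesis
    proof (rule eventually_mono[OF ev])
      fix n assume h: "\<forall>p\<in>S. Hd dist (cut (us n) p) (cut u p) < ereal \<epsilon>"
      have n1: "\<forall>p\<in>S. \<forall>x\<in>cut (us n) p. \<exists>y\<in>cut u p. dist x y < \<epsilon>"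
      proof (intro ballI)
        fix p x assume px: "p \<in> S" "x \<in> cut (us n) p"
        show "\<exists>y\<in>cut u p. dist x y < \<epsilon>" by (rule Hd_ltD1[OF bspec[OF h px(1)] px(2)])
      qed
      have n2: "\<forall>p\<in>S. \<forall>x\<in>cut u p. \<exists>y\<in>cut (us n) p. dist x y < \<epsilon>"
      proof (intro ballI)
        fix p x assume px: "p \<in> S" "x \<in> cut u p"
        obtain y where y: "y \<in> cut (us n) p" "dist y x < \<epsilon>"
          using Hd_ltD2[OF bspec[OF h px(1)] px(2)] by (elim bexE)
        have "dist x y < \<epsilon>" using y(2) by (simp only: dist_commute)
        then show "\<exists>y\<in>cut (us n) p. dist x y < \<epsilon>" using y(1) by (intro bexI)
      qed
      have A: "\<forall>a\<in>endo (us n). \<exists>b\<in>endo u. dbar a b < 2 * \<epsilon>"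
        by (rule transfer_end[OF S(3) S01 S(4) n1 unn])
      have B: "\<forall>a\<in>endo u. \<exists>b\<in>endo (us n). dbar a b < 2 * \<epsilon>"
        by (rule transfer_end[OF S(3) S01 S(4) n2 usnn])
      have B': "\<forall>b\<in>endo u. \<exists>a\<in>endo (us n). dbar a b < 2 * \<epsilon>"
      proof
        fix b assume "b \<in> endo u"
        then obtain a where "a \<in> endo (us n)" "dbar b a < 2 * \<epsilon>" using B by blast
        then show "\<exists>a\<in>endo (us n). dbar a b < 2 * \<epsilon>" using dbar_sym[of b a] by auto
      qed
      show "H_end (us n) u \<le> ereal (2 * \<epsilon>)"
        unfolding H_end_def by (rule Hd_le[OF A B'])
    qed
  qed
  show ?thesis
  proof (rule order_tendstoI)
    fix a :: ereal assume "a < 0"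
    have "0 \<le> H_end (us n) u" for n
      unfolding H_end_def
    proof (rule Hd_nonneg)
      show "0 \<le> dbar a b" for a b :: "'a \<times> real" by (simp add: dbar_def)
      show "(undefined, 0) \<in> endo (us n)" using usnn by (simp add: endo_def)
    qed
    then have "a < H_end (us n) u" for n using \<open>a < 0\<close> by (metis order_less_le_trans)
    then show "eventually (\<lambda>n. a < H_end (us n) u) sequentially"
      by (intro always_eventually allI)
  next
    fix a :: ereal assume "0 < a"
    then obtain z where z: "0 < ereal z" "ereal z < a" using ereal_dense2 by blast
    have "eventually (\<lambda>n. H_end (us n) u \<le> ereal (2 * (z/2))) sequentially"
      using z by (intro key) simp
    then show "eventually (\<lambda>n. H_end (us n) u < a) sequentially"
    proof (rule eventually_mono)
      fix n assume "H_end (us n) u \<le> ereal (2 * (z / 2))"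
      then have "H_end (us n) u \<le> ereal z" by simp
      then show "H_end (us n) u < a" using z(2) by (rule order_le_less_trans)
    qed
  qed
qed

end
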